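(* In the worst case, no algorithm that uses only one disk, accessed by sequential passes, can compute the Burrows–Wheeler transform of a text of length $n$ when the product of the size of its internal memory in bits and its number of passes is $o(n)$; likewise, no such algorithm can invert the Burrows–Wheeler transform (recover $T$ from $\mathrm{bwt}(T)$) when this product is $o(n)$.
   Context: Model: a machine with an internal memory of a given number of bits and a single disk; the input initially resides on the disk, the output must eventually reside on the disk, and the disk is accessed only by sequential passes (scans). For a text $T[1,n]$ over a finite ordered alphabet with a unique smallest terminating character $T[n]$, the suffix array $\mathrm{sa}[1,n]$ lists starting positions of the suffixes of $T$ in lexicographic order, and $\mathrm{bwt}(T)[i] = T[\mathrm{sa}[i]-1]$ if $\mathrm{sa}[i]>1$, $\mathrm{bwt}(T)[i]=T[n]$ if $\mathrm{sa}[i]=1$. "In the worst case" means: for any such algorithm whose (memory size in bits) $\times$ (number of passes) is $o(n)$, there are inputs of length $n$ (for infinitely many $n$) on which it does not produce the correct output. *)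

theory Defs
  imports Main "HOL-Library.Landau_Symbols"
begin

definition valid_text :: "nat set \<Rightarrow> nat list \<Rightarrow> bool" where
  "valid_text \<Sigma> T \<longleftrightarrow> T \<noteq> [] \<and> set T \<subseteq> \<Sigma> \<and> (\<forall>i < length T - 1. last T < T ! i)"

definition suf_less :: "nat list \<Rightarrow> nat \<Rightarrow> nat \<Rightarrow> bool" where
  "suf_less T i j \<longleftrightarrow> (drop i T, drop j T) \<in> lexord {(a, b). a < b}"

definition sa :: "nat list \<Rightarrow> nat list" where
  "sa T = (THE l. distinct l \<and> set l = {0..<length T} \<and> sorted_wrt (suf_less T) l)"

definition bwt :: "nat list \<Rightarrow> nat list" where
  "bwt T = map (\<lambda>i. if i = 0 then last T else T ! (i - 1)) (sa T)"

text \<open>A machine: finite control (states are naturals; a memory of b bits means the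
states used are those below 2^b), a single disk (cells indexed by nat, symbols are
naturals, unbounded to the right) with one head.
A pass is a maximal sequence of head moves in one direction; the count starts at 1
(the initial left-to-right scan) and increases at every change of direction.\<close>

datatype dir = Lm | Rm | Sm

record machine =
  delta :: "nat \<Rightarrow> nat \<Rightarrow> nat \<times> nat \<times> dir"
  final :: "nat \<Rightarrow> bool"

record config =
  st :: nat
  pos :: nat
  tape :: "nat \<Rightarrow> nat"
  lastdir :: dir
  passes :: nat

definition step :: "machine \<Rightarrow> config \<Rightarrow> config" where
  "step M c = (if final M (st c) then c else
     (case delta M (st c) (tape c (pos c)) of (q', g, d) \<Rightarrow>
       c\<lparr> st := q', tape := (tape c)(pos c := g),
          pos := (case d of Lm \<Rightarrow> pos c - 1 | Rm \<Rightarrow> pos c + 1 | Sm \<Rightarrow> pos c),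
          lastdir := (if d = Sm then lastdir c else d),
          passes := (if d = Sm \<or> d = lastdir c then passes c else passes c + 1) \<rparr>))"

definition disk_of :: "nat \<Rightarrow> nat list \<Rightarrow> nat \<Rightarrow> nat" where
  "disk_of blank w = (\<lambda>i. if i < length w then w ! i else blank)"

definition init :: "nat \<Rightarrow> nat list \<Rightarrow> config" where
  "init blank w = \<lparr> st = 0, pos = 0, tape = disk_of blank w, lastdir = Rm, passes = 1 \<rparr>"

definition uses_memory :: "machine \<Rightarrow> nat \<Rightarrow> bool" where
  "uses_memory M b \<longleftrightarrow> (\<forall>q < 2 ^ b. \<forall>g. fst (delta M q g) < 2 ^ b)"

definition computes :: "machine \<Rightarrow> nat \<Rightarrow> nat \<Rightarrow> nat list \<Rightarrow> nat list \<Rightarrow> bool" where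
  "computes M blank p w out \<longleftrightarrow>
     (\<exists>k. let c = (step M ^^ k) (init blank w) in
        final M (st c) \<and> passes c \<le> p \<and> tape c = disk_of blank out)"

end

theory Submission
  imports Defs "HOL-Library.List_Lexorder" "HOL-Library.Multiset" "HOL-Library.Infinite_Set"
begin


lemma suf_less_iff: "suf_less T i j \<longleftrightarrow> drop i T < drop j T"
  by (simp add: suf_less_def list_less_def)

lemma sorted_rank_set:
  fixes key :: "nat \<Rightarrow> 'a::linorder"
  assumes s: "sorted_wrt (\<lambda>i j. key i < key j) l" and i: "i < length l"
  shows "{y \<in> set l. key y < key (l!i)} = set (take i l)"
proof
  show "set (take i l) \<subseteq> {y \<in> set l. key y < key (l!i)}"
  proof
    fix y assume "y \<in> set (take i l)"
    then obtain j where j: "j < length (take i l)" "y = take i l ! j" by (metis in_set_conv_nth)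
    then have "j < i" "y = l ! j" using i by auto
    then show "y \<in> {y \<in> set l. key y < key (l!i)}"
      using s i sorted_wrt_nth_less[OF s, of j i] by auto
  qed
next
  show "{y \<in> set l. key y < key (l!i)} \<subseteq> set (take i l)"
  proof
    fix y assume y: "y \<in> {y \<in> set l. key y < key (l!i)}"
    then obtain j where j: "j < length l" "y = l ! j" by (metis (no_types, lifting) in_set_conv_nth mem_Collect_eq)
    have "j < i"
    proof (rule ccontr)
      assume "\<not> j < i"
      then have "j = i \<or> i < j" by auto
      then show False
      proof
        assume "j = i" then show False using y j by auto
      next
        assume "i < j" then have "key (l!i) < key (l!j)" using sorted_wrt_nth_less[OF s, of i j] j by auto
        then show False using y j by auto
      qed
    qed
    then show "y \<in> set (take i l)" using j i by (metis in_set_conv_nth length_take min_less_iff_conj nth_take)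
  qed
qed

lemma sorted_rank_card:
  fixes key :: "nat \<Rightarrow> 'a::linorder"
  assumes s: "sorted_wrt (\<lambda>i j. key i < key j) l" and i: "i < length l" and d: "distinct l"
  shows "card {y \<in> set l. key y < key (l!i)} = i"
  using sorted_rank_set[OF s i] d i by (simp add: distinct_card)

lemma sorted_key_nth:
  fixes key :: "nat \<Rightarrow> 'a::linorder"
  assumes s: "sorted_wrt (\<lambda>i j. key i < key j) l" and d: "distinct l"
    and x: "x \<in> set l" and c: "card {y \<in> set l. key y < key x} = i"
  shows "i < length l \<and> l ! i = x"
proof -
  obtain j where j: "j < length l" "x = l ! j" using x by (metis in_set_conv_nth)
  have "card {y \<in> set l. key y < key x} = j" using sorted_rank_card[OF s j(1) d] j by simp
  then show ?thesis using c j by simp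
qed

lemma sorted_key_unique:
  fixes key :: "nat \<Rightarrow> 'a::linorder"
  assumes s1: "sorted_wrt (\<lambda>i j. key i < key j) l1" and d1: "distinct l1"
    and s2: "sorted_wrt (\<lambda>i j. key i < key j) l2" and d2: "distinct l2"
    and e: "set l1 = set l2"
  shows "l1 = l2"
proof (rule nth_equalityI)
  show len: "length l1 = length l2" using d1 d2 e by (metis distinct_card)
  fix i assume i: "i < length l1"
  have "card {y \<in> set l1. key y < key (l1!i)} = i" by (rule sorted_rank_card[OF s1 i d1])
  then have "card {y \<in> set l2. key y < key (l1!i)} = i" using e by simp
  moreover have "l1 ! i \<in> set l2" using e i by (metis nth_mem)
  ultimately show "l1 ! i = l2 ! i" using sorted_key_nth[OF s2 d2] by metis
qed

definition sa_ok :: "nat list \<Rightarrow> nat list \<Rightarrow> bool" where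
  "sa_ok T l \<longleftrightarrow> distinct l \<and> set l = {0..<length T} \<and> sorted_wrt (\<lambda>i j. drop i T < drop j T) l"

lemma sa_exists: "sa_ok T (sort_key (\<lambda>i. drop i T) [0..<length T])"
proof -
  let ?l = "sort_key (\<lambda>i. drop i T) [0..<length T]"
  have d: "distinct ?l" by simp
  have st: "set ?l = {0..<length T}" by simp
  have inj: "inj_on (\<lambda>i. drop i T) (set ?l)"
    by (rule inj_onI) (metis st atLeastLessThan_iff diff_diff_cancel length_drop less_imp_le_nat)
  have "sorted (map (\<lambda>i. drop i T) ?l)" by simp
  moreover have "distinct (map (\<lambda>i. drop i T) ?l)" using d inj by (simp add: distinct_map)
  ultimately have "sorted_wrt (<) (map (\<lambda>i. drop i T) ?l)" by (simp add: strict_sorted_iff)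
  then have "sorted_wrt (\<lambda>i j. drop i T < drop j T) ?l" by (simp add: sorted_wrt_map)
  then show ?thesis using d st by (simp add: sa_ok_def)
qed

lemma sa_ok_sa: "sa_ok T (sa T)"
proof -
  have "\<exists>!l. sa_ok T l"
  proof
    show "sa_ok T (sort_key (\<lambda>i. drop i T) [0..<length T])" by (rule sa_exists)
    fix l assume "sa_ok T l"
    then show "l = sort_key (\<lambda>i. drop i T) [0..<length T]"
      using sa_exists[of T] sorted_key_unique[of "\<lambda>i. drop i T"] unfolding sa_ok_def by metis
  qed
  then have "sa_ok T (THE l. sa_ok T l)" by (rule theI')
  moreover have "(THE l. sa_ok T l) = sa T"
    unfolding sa_def sa_ok_def suf_less_iff by simp
  ultimately show ?thesis by simp
qed

lemma sa_distinct: "distinct (sa T)" and sa_set: "set (sa T) = {0..<length T}"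
  and sa_sorted: "sorted_wrt (\<lambda>i j. drop i T < drop j T) (sa T)"
  using sa_ok_sa[of T] unfolding sa_ok_def by auto

lemma sa_length: "length (sa T) = length T"
  using sa_distinct[of T] sa_set[of T] by (metis card_atLeastLessThan distinct_card minus_nat.diff_0)

lemma sa_nth:
  assumes "x < length T" "card {y. y < length T \<and> drop y T < drop x T} = i"
  shows "i < length T \<and> sa T ! i = x"
proof -
  have "{y \<in> set (sa T). drop y T < drop x T} = {y. y < length T \<and> drop y T < drop x T}"
    using sa_set[of T] by auto
  then show ?thesis using sorted_key_nth[OF sa_sorted[of T] sa_distinct[of T], where x=x and i=i] assms sa_set[of T] sa_length[of T]
    by auto
qed

lemma length_bwt: "length (bwt T) = length T"
  by (simp add: bwt_def sa_length)

lemma bwt_nth: "i < length T \<Longrightarrow> bwt T ! i = (if sa T ! i = 0 then last T else T ! (sa T ! i - 1))"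
  by (simp add: bwt_def sa_length)


lemma valid_last_less: "valid_text \<Sigma> T \<Longrightarrow> i < length T - 1 \<Longrightarrow> last T < T ! i"
  by (simp add: valid_text_def)

lemma rot_less:
  assumes v: "valid_text \<Sigma> T" and p: "p < length T" and q: "q < length T"
    and lt: "drop p T < drop q T"
  shows "rotate p T < rotate q T"
proof -
  let ?n = "length T"
  have rp: "rotate p T = drop p T @ take p T" using p by (simp add: rotate_drop_take)
  have rq: "rotate q T = drop q T @ take q T" using q by (simp add: rotate_drop_take)
  from lt have "(drop p T, drop q T) \<in> lexord {(u, v). u < v}" by (simp add: list_less_def)
  then have "(length (drop p T) < length (drop q T) \<and> take (length (drop p T)) (drop q T) = drop p T) \<or>
     (\<exists>i. i < min (length (drop p T)) (length (drop q T)) \<and> take i (drop p T) = take i (drop q T) \<and>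
          (drop p T ! i, drop q T ! i) \<in> {(u, v). u < v})"
    by (simp add: lexord_take_index_conv)
  then show ?thesis
  proof
    assume a: "length (drop p T) < length (drop q T) \<and> take (length (drop p T)) (drop q T) = drop p T"
    then have qp: "q < p" using p q by auto
    let ?a = "?n - p"
    have "drop q T ! (?a - 1) = drop p T ! (?a - 1)"
      using a by (metis diff_less length_drop nth_take p zero_less_diff zero_less_one)
    then have "T ! (q + ?a - 1) = T ! (p + ?a - 1)" using p q qp by simp
    also have "p + ?a - 1 = ?n - 1" using p by simp
    also have "T ! (?n - 1) = last T" using p by (subst last_conv_nth) auto
    finally have "T ! (q + ?a - 1) = last T" .
    moreover have "q + ?a - 1 < ?n - 1" using qp p by simp
    ultimately show ?thesis using valid_last_less[OF v, of "q + ?a - 1"] by simp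
  next
    assume "\<exists>i. i < min (length (drop p T)) (length (drop q T)) \<and> take i (drop p T) = take i (drop q T) \<and>
          (drop p T ! i, drop q T ! i) \<in> {(u, v). u < v}"
    then obtain i where i: "i < min (length (drop p T)) (length (drop q T))"
      "take i (drop p T) = take i (drop q T)" "drop p T ! i < drop q T ! i" by auto
    have ip: "i < length (drop p T)" "i < length (drop q T)" using i(1) by simp_all
    have "take i (rotate p T) = take i (rotate q T)" using i rp rq ip by simp
    moreover have "rotate p T ! i < rotate q T ! i" using i(3) ip rp rq by (simp add: nth_append)
    moreover have "i < min (length (rotate p T)) (length (rotate q T))" using ip by simp
    ultimately have "(rotate p T, rotate q T) \<in> lexord {(u, v). u < v}"
      unfolding lexord_take_index_conv by blast
    then show ?thesis by (simp add: list_less_def)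
  qed
qed

lemma take_mono_lex:
  fixes xs ys :: "nat list"
  assumes "xs \<le> ys" shows "take j xs \<le> take j ys"
  using assms
proof (induction j arbitrary: xs ys)
  case 0 then show ?case by simp
next
  case (Suc j)
  show ?case
  proof (cases xs)
    case Nil then show ?thesis by simp
  next
    case (Cons a xs')
    then obtain b ys' where ys: "ys = b # ys'" using Suc.prems by (cases ys) auto
    then show ?thesis using Suc Cons by (auto simp: less_le)
  qed
qed

fun ibw :: "nat list \<Rightarrow> nat \<Rightarrow> nat list list" where
  "ibw L 0 = replicate (length L) []"
| "ibw L (Suc j) = sort (map (\<lambda>(c, r). c # r) (zip L (ibw L j)))"

definition prv :: "nat \<Rightarrow> nat \<Rightarrow> nat" where
  "prv n p = (if p = 0 then n - 1 else p - 1)"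

lemma rot_prev:
  assumes n: "0 < length T" and p: "p < length T" and j: "j < length T"
  shows "last (rotate p T) # take j (rotate p T) = take (Suc j) (rotate (prv (length T) p) T)"
proof -
  let ?r = "rotate (prv (length T) p) T"
  have "rotate (Suc (prv (length T) p)) T = rotate p T"
  proof (cases "p = 0")
    case True
    then have "Suc (prv (length T) p) = length T" using n by (simp add: prv_def)
    then show ?thesis using True by simp
  next
    case False then show ?thesis by (simp add: prv_def)
  qed
  then have e: "rotate1 ?r = rotate p T" by simp
  have ne: "?r \<noteq> []" using n by simp
  then have "rotate1 ?r = tl ?r @ [hd ?r]" by (simp add: rotate1_hd_tl)
  with e have rp: "rotate p T = tl ?r @ [hd ?r]" by simp
  have lt: "length (tl ?r) = length T - 1" by simp
  have "take j (rotate p T) = take j (tl ?r)" using rp lt j by simp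
  moreover have "last (rotate p T) = hd ?r" using rp by simp
  moreover have "take (Suc j) ?r = hd ?r # take j (tl ?r)" using ne by (cases ?r) auto
  ultimately show ?thesis by simp
qed

lemma bw_last:
  assumes "p < length T"
  shows "(if p = 0 then last T else T ! (p - 1)) = last (rotate p T)"
proof (cases "p = 0")
  case True then show ?thesis by simp
next
  case False
  have ne: "T \<noteq> []" using assms by auto
  have "rotate p T = drop p T @ take p T" using assms by (simp add: rotate_drop_take)
  moreover have "take p T \<noteq> []" using False ne by simp
  moreover have "last (take p T) = T ! (p - 1)" using False assms ne by (simp add: last_conv_nth)
  ultimately show ?thesis using False by simp
qed

lemma prv_perm: "0 < n \<Longrightarrow> prv n ` {0..<n} = {0..<n}" and prv_inj: "0 < n \<Longrightarrow> inj_on (prv n) {0..<n}"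
proof -
  assume n: "0 < n"
  show "inj_on (prv n) {0..<n}" by (rule inj_onI) (auto simp: prv_def split: if_splits)
  show "prv n ` {0..<n} = {0..<n}"
  proof
    show "prv n ` {0..<n} \<subseteq> {0..<n}" using n by (auto simp: prv_def)
    show "{0..<n} \<subseteq> prv n ` {0..<n}"
    proof
      fix x assume x: "x \<in> {0..<n}"
      show "x \<in> prv n ` {0..<n}"
      proof (cases "x = n - 1")
        case True then show ?thesis using n by (auto simp: prv_def intro!: image_eqI[where x=0])
      next
        case False then show ?thesis using x by (auto simp: prv_def intro!: image_eqI[where x="Suc x"])
      qed
    qed
  qed
qed


lemma ibw_correct:
  assumes v: "valid_text \<Sigma> T"
  shows "j \<le> length T \<Longrightarrow> ibw (bwt T) j = map (\<lambda>p. take j (rotate p T)) (sa T)"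
proof (induction j)
  case 0 then show ?case by (simp add: length_bwt sa_length map_replicate_const)
next
  case (Suc j)
  let ?n = "length T"
  let ?l = "sa T"
  have n: "0 < ?n" using v by (simp add: valid_text_def)
  have jn: "j < ?n" using Suc.prems by simp
  have bw: "bwt T = map (\<lambda>p. last (rotate p T)) ?l"
    unfolding bwt_def by (rule map_cong) (auto simp: sa_set bw_last)
  have z: "map (\<lambda>(c, r). c # r) (zip (bwt T) (ibw (bwt T) j))
      = map (\<lambda>p. last (rotate p T) # take j (rotate p T)) ?l"
    using Suc.IH jn by (simp add: bw zip_map_map zip_same_conv_map)
  also have "\<dots> = map (\<lambda>p. take (Suc j) (rotate (prv ?n p) T)) ?l"
    by (rule map_cong) (auto simp: sa_set rot_prev[OF n _ jn])
  finally have z2: "map (\<lambda>(c, r). c # r) (zip (bwt T) (ibw (bwt T) j)) = 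
     map (\<lambda>p. take (Suc j) (rotate (prv ?n p) T)) ?l" .
  have ml: "mset ?l = mset_set {0..<?n}" using sa_distinct[of T] sa_set[of T] by (metis mset_set_set)
  have "mset (map (\<lambda>p. take (Suc j) (rotate (prv ?n p) T)) ?l)
     = image_mset (\<lambda>p. take (Suc j) (rotate p T)) (image_mset (prv ?n) (mset_set {0..<?n}))"
    by (simp add: ml image_mset.compositionality o_def)
  also have "image_mset (prv ?n) (mset_set {0..<?n}) = mset_set {0..<?n}"
    using image_mset_mset_set[OF prv_inj[OF n]] prv_perm[OF n] by simp
  also have "image_mset (\<lambda>p. take (Suc j) (rotate p T)) (mset_set {0..<?n}) =
     mset (map (\<lambda>p. take (Suc j) (rotate p T)) ?l)" by (simp only: mset_map ml)
  finally have m: "mset (map (\<lambda>p. take (Suc j) (rotate (prv ?n p) T)) ?l) =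
     mset (map (\<lambda>p. take (Suc j) (rotate p T)) ?l)" .
  have "sorted_wrt (\<lambda>p q. rotate p T < rotate q T) ?l"
    by (rule sorted_wrt_mono_rel[OF _ sa_sorted[of T]]) (auto simp: sa_set intro: rot_less[OF v])
  then have "sorted_wrt (\<lambda>p q. take (Suc j) (rotate p T) \<le> take (Suc j) (rotate q T)) ?l"
    by (rule sorted_wrt_mono_rel[rotated]) (auto intro: take_mono_lex)
  then have s: "sorted (map (\<lambda>p. take (Suc j) (rotate p T)) ?l)" by (simp add: sorted_map)
  show ?case using properties_for_sort[OF _ s] m z2 by simp
qed

lemma bwt_inj:
  assumes v1: "valid_text \<Sigma>1 T1" and v2: "valid_text \<Sigma>2 T2" and e: "bwt T1 = bwt T2"
  shows "T1 = T2"
proof -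
  have len: "length T1 = length T2" using e by (metis length_bwt)
  let ?n = "length T1"
  have n: "0 < ?n" using v1 by (simp add: valid_text_def)
  have i1: "ibw (bwt T1) ?n = map (\<lambda>p. take ?n (rotate p T1)) (sa T1)"
    using ibw_correct[OF v1, of ?n] by simp
  have i2: "ibw (bwt T2) ?n = map (\<lambda>p. take ?n (rotate p T2)) (sa T2)"
    using ibw_correct[OF v2, of ?n] len by simp
  have m1: "map (\<lambda>p. take ?n (rotate p T1)) (sa T1) = map (\<lambda>p. rotate p T1) (sa T1)"
    by (rule map_cong) simp_all
  have m2: "map (\<lambda>p. take ?n (rotate p T2)) (sa T2) = map (\<lambda>p. rotate p T2) (sa T2)"
    by (rule map_cong) (simp_all add: len)
  have E: "map (\<lambda>p. rotate p T1) (sa T1) = map (\<lambda>p. rotate p T2) (sa T2)"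
    using i1 i2 m1 m2 e by metis
  have "0 \<in> set (sa T1)" using n by (simp add: sa_set)
  then have "rotate 0 T1 \<in> set (map (\<lambda>p. rotate p T1) (sa T1))" unfolding set_map by (rule imageI)
  then have "T1 \<in> set (map (\<lambda>p. rotate p T2) (sa T2))" using E by simp
  then obtain q where q: "q \<in> set (sa T2)" "T1 = rotate q T2" by auto
  have q1: "q < length T2" using q(1) by (simp add: sa_set)
  have "0 \<in> set (sa T2)" using n len by (simp add: sa_set)
  then have "rotate 0 T2 \<in> set (map (\<lambda>p. rotate p T2) (sa T2))" unfolding set_map by (rule imageI)
  then have "T2 \<in> set (map (\<lambda>p. rotate p T1) (sa T1))" using E by simp
  then obtain q' where q': "q' \<in> set (sa T1)" "T2 = rotate q' T1" by auto
  have q1': "q' < length T1" using q'(1) by (simp add: sa_set)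
  show ?thesis
  proof (cases "q = 0 \<or> q' = 0")
    case True
    then show ?thesis
    proof
      assume "q = 0" then show ?thesis using q(2) by simp
    next
      assume "q' = 0" then show ?thesis using q'(2) by simp
    qed
  next
    case False
    have "last T1 = T2 ! (q - 1)" using bw_last[OF q1] False q by simp
    moreover have "q - 1 < length T2 - 1" using False q1 by presburger
    ultimately have a: "last T2 < last T1" using valid_last_less[OF v2, of "q - 1"] by simp
    have "last T2 = T1 ! (q' - 1)" using bw_last[OF q1'] False q' by simp
    moreover have "q' - 1 < length T1 - 1" using False q1' by presburger
    ultimately have "last T1 < last T2" using valid_last_less[OF v1, of "q' - 1"] by simp
    then show ?thesis using a by simp
  qed
qed


lemma step_final: "final M (st c) \<Longrightarrow> step M c = c"
  by (simp add: step_def)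

lemma step_fields:
  assumes "\<not> final M (st c)" "delta M (st c) (tape c (pos c)) = (q, g, d)"
  shows "st (step M c) = q \<and> tape (step M c) = (tape c)(pos c := g) \<and>
    pos (step M c) = (case d of Lm \<Rightarrow> pos c - 1 | Rm \<Rightarrow> pos c + 1 | Sm \<Rightarrow> pos c) \<and>
    lastdir (step M c) = (if d = Sm then lastdir c else d) \<and>
    passes (step M c) = (if d = Sm \<or> d = lastdir c then passes c else passes c + 1)"
  using assms by (simp add: step_def)

definition is_entry :: "machine \<Rightarrow> nat \<Rightarrow> config \<Rightarrow> bool" where
  "is_entry M b c \<longleftrightarrow> \<not> final M (st c) \<and> pos c = b \<and> snd (snd (delta M (st c) (tape c (pos c)))) = Lm"

fun ents :: "machine \<Rightarrow> nat \<Rightarrow> config \<Rightarrow> nat \<Rightarrow> nat list" where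
  "ents M b c 0 = []"
| "ents M b c (Suc t) = ents M b c t @
     (if is_entry M b ((step M ^^ t) c) then [st ((step M ^^ Suc t) c)] else [])"

definition lefteq :: "nat \<Rightarrow> config \<Rightarrow> config \<Rightarrow> bool" where
  "lefteq b c d \<longleftrightarrow> (\<forall>i<b. tape c i = tape d i)"

definition Rel :: "nat \<Rightarrow> config \<Rightarrow> config \<Rightarrow> bool" where
  "Rel b c d \<longleftrightarrow> lefteq b c d \<and> (pos c < b \<longleftrightarrow> pos d < b) \<and> (pos c < b \<longrightarrow> st c = st d \<and> pos c = pos d)"

lemma funpow_step_Suc: "(step M ^^ Suc t) c = step M ((step M ^^ t) c)"
  by simp

lemma L1:
  assumes "pos a < b" "Rel b a c"
  shows "Rel b (step M a) (step M c)"
proof -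
  have s: "st a = st c" "pos a = pos c" "pos c < b" and le: "lefteq b a c" using assms by (auto simp: Rel_def)
  have ta: "tape a (pos a) = tape c (pos c)" using le s assms(1) by (simp add: lefteq_def)
  show ?thesis
  proof (cases "final M (st a)")
    case True then show ?thesis using assms s by (simp add: step_final)
  next
    case False
    obtain q g d where dl: "delta M (st a) (tape a (pos a)) = (q, g, d)" by (metis prod_cases3)
    have dl2: "delta M (st c) (tape c (pos c)) = (q, g, d)" using dl s ta by simp
    have F2: "\<not> final M (st c)" using False s by simp
    note A = step_fields[OF False dl] and C = step_fields[OF F2 dl2]
    show ?thesis using A C s le unfolding Rel_def lefteq_def by (auto split: dir.splits)
  qed
qed

lemma L2:
  assumes "b \<le> pos a" "\<not> is_entry M b a"
  shows "b \<le> pos (step M a) \<and> lefteq b (step M a) a"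
proof (cases "final M (st a)")
  case True then show ?thesis using assms by (simp add: step_final lefteq_def)
next
  case False
  obtain q g d where dl: "delta M (st a) (tape a (pos a)) = (q, g, d)" by (metis prod_cases3)
  note A = step_fields[OF False dl]
  have "d = Lm \<longrightarrow> pos a \<noteq> b" using assms(2) False dl by (auto simp: is_entry_def)
  then show ?thesis using A assms(1) unfolding lefteq_def by (auto split: dir.splits)
qed

lemma L3:
  assumes "is_entry M b a" "0 < b"
  shows "pos (step M a) = b - 1 \<and> lefteq b (step M a) a \<and> st (step M a) = fst (delta M (st a) (tape a (pos a)))"
proof -
  have False': "\<not> final M (st a)" and p: "pos a = b" using assms by (auto simp: is_entry_def)
  obtain q g d where dl: "delta M (st a) (tape a (pos a)) = (q, g, d)" by (metis prod_cases3)
  have "d = Lm" using assms dl by (simp add: is_entry_def)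
  then show ?thesis using step_fields[OF False' dl] p dl unfolding lefteq_def by auto
qed

lemma L4: "pos a < b \<Longrightarrow> \<not> is_entry M b a"
  by (simp add: is_entry_def)

lemma ents_prefix: "t \<le> t' \<Longrightarrow> \<exists>r. ents M b c t' = ents M b c t @ r"
proof (induction t' rule: dec_induct)
  case base then show ?case by simp
next
  case (step t') then show ?case by auto
qed

lemma final_stays: "final M (st ((step M ^^ t) c)) \<Longrightarrow> (step M ^^ (t + d)) c = (step M ^^ t) c"
  by (induction d) (simp_all add: step_final)

lemma final_unique:
  assumes "final M (st ((step M ^^ t1) c))" "final M (st ((step M ^^ t2) c))"
  shows "(step M ^^ t1) c = (step M ^^ t2) c"
proof (cases "t1 \<le> t2")
  case True
  then show ?thesis using final_stays[OF assms(1), of "t2 - t1"] by simp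
next
  case False
  then show ?thesis using final_stays[OF assms(2), of "t1 - t2"] by simp
qed

lemma stay_right:
  assumes "b \<le> pos ((step M ^^ t') c)"
    and "\<forall>v. t' \<le> v \<and> v < u \<longrightarrow> \<not> is_entry M b ((step M ^^ v) c)"
  shows "t' + d \<le> u \<Longrightarrow> b \<le> pos ((step M ^^ (t' + d)) c) \<and> lefteq b ((step M ^^ (t' + d)) c) ((step M ^^ t') c)
         \<and> ents M b c (t' + d) = ents M b c t'"
proof (induction d)
  case 0 then show ?case using assms by (simp add: lefteq_def)
next
  case (Suc d)
  then have IH: "b \<le> pos ((step M ^^ (t' + d)) c)" "lefteq b ((step M ^^ (t' + d)) c) ((step M ^^ t') c)"
      "ents M b c (t' + d) = ents M b c t'" by auto
  have ne: "\<not> is_entry M b ((step M ^^ (t' + d)) c)" using assms(2) Suc.prems by simp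
  have "b \<le> pos ((step M ^^ Suc (t' + d)) c) \<and> lefteq b ((step M ^^ Suc (t' + d)) c) ((step M ^^ (t' + d)) c)"
    using L2[OF IH(1) ne] by simp
  then show ?case using IH ne unfolding lefteq_def by simp
qed

lemma ents_len_mono: "t \<le> t' \<Longrightarrow> length (ents M b c t) \<le> length (ents M b c t')"
  using ents_prefix[of t t' M b c] by auto

lemma ents_const_no_entry:
  assumes "t' \<le> K" "ents M b c K = ents M b c t'"
  shows "\<forall>v. t' \<le> v \<and> v < K \<longrightarrow> \<not> is_entry M b ((step M ^^ v) c)"
proof (intro allI impI)
  fix v assume v: "t' \<le> v \<and> v < K"
  show "\<not> is_entry M b ((step M ^^ v) c)"
  proof
    assume e: "is_entry M b ((step M ^^ v) c)"
    have "length (ents M b c (Suc v)) = Suc (length (ents M b c v))" using e by simp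
    moreover have "length (ents M b c t') \<le> length (ents M b c v)" using v ents_len_mono by blast
    moreover have "length (ents M b c (Suc v)) \<le> length (ents M b c K)" using v ents_len_mono by (meson Suc_leI)
    ultimately show False using assms(2) by simp
  qed
qed

lemma find_entry:
  assumes r: "b \<le> pos ((step M ^^ t') c)" and E: "ents M b c K = ents M b c t' @ s # rest"
  shows "\<exists>u\<ge>t'. ents M b c u = ents M b c t' \<and> is_entry M b ((step M ^^ u) c) \<and>
     st ((step M ^^ Suc u) c) = s \<and> lefteq b ((step M ^^ u) c) ((step M ^^ t') c)"
proof -
  have tK: "t' \<le> K"
  proof (rule ccontr)
    assume "\<not> t' \<le> K"
    then have "length (ents M b c K) \<le> length (ents M b c t')" using ents_len_mono by simp
    then show False using E by simp
  qed
  have ex: "\<exists>v. t' \<le> v \<and> v < K \<and> is_entry M b ((step M ^^ v) c)"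
  proof (rule ccontr)
    assume "\<not> ?thesis"
    then have "\<forall>v. t' \<le> v \<and> v < K \<longrightarrow> \<not> is_entry M b ((step M ^^ v) c)" by blast
    from stay_right[OF r this, of "K - t'"] tK have "ents M b c K = ents M b c t'" by simp
    then show False using E by simp
  qed
  define u where "u = (LEAST v. t' \<le> v \<and> v < K \<and> is_entry M b ((step M ^^ v) c))"
  have u: "t' \<le> u \<and> u < K \<and> is_entry M b ((step M ^^ u) c)"
    unfolding u_def using LeastI_ex[OF ex] .
  have nou: "\<forall>v. t' \<le> v \<and> v < u \<longrightarrow> \<not> is_entry M b ((step M ^^ v) c)"
  proof (intro allI impI)
    fix v assume v: "t' \<le> v \<and> v < u"
    show "\<not> is_entry M b ((step M ^^ v) c)"
    proof
      assume "is_entry M b ((step M ^^ v) c)"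
      then have "u \<le> v" unfolding u_def using v u by (intro Least_le) simp
      then show False using v by simp
    qed
  qed
  have SR: "b \<le> pos ((step M ^^ u) c) \<and> lefteq b ((step M ^^ u) c) ((step M ^^ t') c) \<and> ents M b c u = ents M b c t'"
    using stay_right[OF r nou, of "u - t'"] u by simp
  have es: "ents M b c (Suc u) = ents M b c t' @ [st ((step M ^^ Suc u) c)]" using SR u by simp
  obtain r2 where K2: "ents M b c K = ents M b c (Suc u) @ r2" using ents_prefix[of "Suc u" K M b c] u by auto
  have "ents M b c t' @ s # rest = ents M b c t' @ (st ((step M ^^ Suc u) c) # r2)"
    using E es K2 by (simp only: append.assoc append_Cons append_Nil)
  then have "st ((step M ^^ Suc u) c) = s" by simp
  then show ?thesis using SR u by blast
qed


lemma left_det_main: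
  assumes b: "0 < b" and R0: "Rel b cA cB"
    and E: "ents M b cA KA = ents M b cB KB"
  shows "t \<le> KA \<Longrightarrow> \<exists>t'. Rel b ((step M ^^ t) cA) ((step M ^^ t') cB) \<and> ents M b cA t = ents M b cB t'"
proof (induction t)
  case 0 then show ?case using R0 by (intro exI[of _ 0]) simp
next
  case (Suc t)
  then obtain t' where R: "Rel b ((step M ^^ t) cA) ((step M ^^ t') cB)" and Et: "ents M b cA t = ents M b cB t'"
    by auto
  let ?a = "(step M ^^ t) cA" and ?c = "(step M ^^ t') cB"
  show ?case
  proof (cases "pos ?a < b")
    case True
    have "Rel b (step M ?a) (step M ?c)" by (rule L1[OF True R])
    moreover have "pos ?c < b" using True R by (simp add: Rel_def)
    ultimately show ?thesis using Et L4[OF True] L4[of ?c b M]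
      by (intro exI[of _ "Suc t'"]) simp
  next
    case False
    then have cr: "b \<le> pos ?c" using R by (simp add: Rel_def)
    show ?thesis
    proof (cases "is_entry M b ?a")
      case False2: False
      have "b \<le> pos (step M ?a) \<and> lefteq b (step M ?a) ?a" using L2[of b ?a M] False False2 by simp
      then have "Rel b (step M ?a) ?c" using R cr unfolding Rel_def lefteq_def by auto
      then show ?thesis using Et False2 by (intro exI[of _ t']) simp
    next
      case True
      let ?s = "st (step M ?a)"
      have ea: "ents M b cA (Suc t) = ents M b cA t @ [?s]" using True by simp
      obtain r where "ents M b cA KA = ents M b cA (Suc t) @ r" using ents_prefix[OF Suc.prems] by blast
      then have "ents M b cB KB = ents M b cB t' @ ?s # r" using E ea Et by simp
      from find_entry[OF cr this] obtain u where u: "u \<ge> t'" "ents M b cB u = ents M b cB t'"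
        "is_entry M b ((step M ^^ u) cB)" "st ((step M ^^ Suc u) cB) = ?s"
        "lefteq b ((step M ^^ u) cB) ?c" by blast
      have A3: "pos (step M ?a) = b - 1 \<and> lefteq b (step M ?a) ?a" using L3[OF True b] by simp
      have B3: "pos (step M ((step M ^^ u) cB)) = b - 1 \<and> lefteq b (step M ((step M ^^ u) cB)) ((step M ^^ u) cB)"
        using L3[OF u(3) b] by simp
      have "Rel b (step M ?a) (step M ((step M ^^ u) cB))"
        using A3 B3 u(4,5) R b unfolding Rel_def lefteq_def by auto
      moreover have "ents M b cA (Suc t) = ents M b cB (Suc u)" using ea u Et by simp
      ultimately show ?thesis by (intro exI[of _ "Suc u"]) simp
    qed
  qed
qed

lemma left_det:
  assumes b: "0 < b" and R0: "Rel b cA cB"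
    and fA: "final M (st ((step M ^^ KA) cA))" and fB: "final M (st ((step M ^^ KB) cB))"
    and E: "ents M b cA KA = ents M b cB KB"
  shows "lefteq b ((step M ^^ KA) cA) ((step M ^^ KB) cB)"
proof -
  obtain t' where R: "Rel b ((step M ^^ KA) cA) ((step M ^^ t') cB)" and Et: "ents M b cA KA = ents M b cB t'"
    using left_det_main[OF b R0 E, of KA] by auto
  show ?thesis
  proof (cases "pos ((step M ^^ KA) cA) < b")
    case True
    then have "final M (st ((step M ^^ t') cB))" using R fA by (simp add: Rel_def)
    then have "(step M ^^ t') cB = (step M ^^ KB) cB" using final_unique fB by blast
    then show ?thesis using R by (simp add: Rel_def)
  next
    case False
    then have cr: "b \<le> pos ((step M ^^ t') cB)" using R by (simp add: Rel_def)
    show ?thesis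
    proof (cases "KB \<le> t'")
      case True
      then have "(step M ^^ t') cB = (step M ^^ KB) cB" using final_stays[OF fB, of "t' - KB"] by simp
      then show ?thesis using R by (simp add: Rel_def)
    next
      case False
      have ne: "\<forall>v. t' \<le> v \<and> v < KB \<longrightarrow> \<not> is_entry M b ((step M ^^ v) cB)"
        using ents_const_no_entry[of t' KB M b cB] False E Et by simp
      have "lefteq b ((step M ^^ KB) cB) ((step M ^^ t') cB)"
        using stay_right[OF cr ne, of "KB - t'"] False by simp
      then show ?thesis using R unfolding Rel_def lefteq_def by auto
    qed
  qed
qed


definition pinv :: "nat \<Rightarrow> config \<Rightarrow> nat \<Rightarrow> bool" where
  "pinv b c e \<longleftrightarrow> 1 \<le> passes c \<and>
     (pos c < b \<longrightarrow> 2 * e \<le> passes c \<and> (lastdir c = Rm \<and> 0 < e \<longrightarrow> 2 * e + 1 \<le> passes c)) \<and>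
     (b \<le> pos c \<longrightarrow> 2 * e + 1 \<le> passes c \<and> (lastdir c = Lm \<longrightarrow> 2 * e + 2 \<le> passes c))"

lemma pinv_step:
  assumes b: "0 < b" and I: "pinv b c e"
  shows "pinv b (step M c) (e + (if is_entry M b c then 1 else 0))"
proof (cases "final M (st c)")
  case True then show ?thesis using I by (simp add: step_final is_entry_def)
next
  case False
  obtain q g d where dl: "delta M (st c) (tape c (pos c)) = (q, g, d)" by (metis prod_cases3)
  note S = step_fields[OF False dl]
  show ?thesis
  proof (cases d)
    case Lm
    show ?thesis
    proof (cases "pos c = b")
      case True
      then have "is_entry M b c" using False dl Lm by (simp add: is_entry_def)
      then show ?thesis using S I Lm True b unfolding pinv_def by auto
    next
      case False2: False
      then have "\<not> is_entry M b c" by (simp add: is_entry_def)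
      moreover have "(pos c < b \<longleftrightarrow> pos c - 1 < b)" using False2 by auto
      ultimately show ?thesis using S I Lm False2 unfolding pinv_def by auto
    qed
  next
    case Rm
    then have ne: "\<not> is_entry M b c" using False dl by (simp add: is_entry_def)
    show ?thesis
    proof (cases "pos c + 1 = b")
      case True then show ?thesis using S I Rm ne unfolding pinv_def by auto
    next
      case False2: False
      then have "(pos c < b \<longleftrightarrow> pos c + 1 < b)" by auto
      then show ?thesis using S I Rm ne unfolding pinv_def by auto
    qed
  next
    case Sm
    then have ne: "\<not> is_entry M b c" using False dl by (simp add: is_entry_def)
    then show ?thesis using S I Sm unfolding pinv_def by auto
  qed
qed

lemma pinv_run:
  assumes b: "0 < b" and I0: "pinv b c 0"
  shows "pinv b ((step M ^^ t) c) (length (ents M b c t))"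
proof (induction t)
  case 0 then show ?case using I0 by simp
next
  case (Suc t)
  from pinv_step[OF b Suc.IH, of M] show ?case by (cases "is_entry M b ((step M ^^ t) c)") simp_all
qed

lemma ents_le_passes:
  assumes b: "0 < b" and I0: "pinv b c 0"
  shows "length (ents M b c t) \<le> passes ((step M ^^ t) c)"
  using pinv_run[OF b I0, where M=M and t=t] unfolding pinv_def by (cases "pos ((step M ^^ t) c) < b") auto

lemma pinv_init: "0 < b \<Longrightarrow> pinv b (init blank w) 0"
  by (simp add: pinv_def init_def)

lemma st_bound:
  assumes U: "uses_memory M m" and s0: "st c < 2 ^ m"
  shows "st ((step M ^^ t) c) < 2 ^ m"
proof (induction t)
  case 0 then show ?case using s0 by simp
next
  case (Suc t)
  let ?c = "(step M ^^ t) c"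
  show ?case
  proof (cases "final M (st ?c)")
    case True then show ?thesis using Suc by (simp add: step_final)
  next
    case False
    obtain q g d where dl: "delta M (st ?c) (tape ?c (pos ?c)) = (q, g, d)" by (metis prod_cases3)
    have "q < 2 ^ m" using U Suc.IH dl unfolding uses_memory_def by (metis fst_conv)
    then show ?thesis using step_fields[OF False dl] by simp
  qed
qed

lemma ents_bound:
  assumes U: "uses_memory M m" and s0: "st c < 2 ^ m"
  shows "set (ents M b c t) \<subseteq> {..<2 ^ m}"
proof (induction t)
  case 0 then show ?case by simp
next
  case (Suc t) then show ?case using st_bound[OF U s0, of "Suc t"] by auto
qed


lemma counting:
  assumes b: "0 < b" and U: "uses_memory M m"
    and W: "\<forall>x\<in>I. \<forall>i<b. disk_of blank (inp x) i = dd i"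
    and C: "\<forall>x\<in>I. computes M blank p (inp x) (out x)"
  shows "card ((\<lambda>x. map (disk_of blank (out x)) [0..<b]) ` I) \<le> card {l. set l \<subseteq> {..<(2::nat)^m} \<and> length l \<le> p}"
proof -
  let ?g = "\<lambda>x. map (disk_of blank (out x)) [0..<b]"
  let ?P = "\<lambda>x k. final M (st ((step M ^^ k) (init blank (inp x)))) \<and> passes ((step M ^^ k) (init blank (inp x))) \<le> p
      \<and> tape ((step M ^^ k) (init blank (inp x))) = disk_of blank (out x)"
  define K where "K x = (SOME k. ?P x k)" for x
  have K: "?P x (K x)" if "x \<in> I" for x
  proof -
    have "\<exists>k. ?P x k" using C that unfolding computes_def Let_def by blast
    then show ?thesis unfolding K_def by (rule someI_ex)
  qed
  define \<phi> where "\<phi> x = ents M b (init blank (inp x)) (K x)" for x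
  let ?L = "{l. set l \<subseteq> {..<(2::nat)^m} \<and> length l \<le> p}"
  have fin: "finite ?L" by (rule finite_lists_length_le) simp
  have phiL: "\<phi> ` I \<subseteq> ?L"
  proof
    fix l assume "l \<in> \<phi> ` I"
    then obtain x where w: "x \<in> I" "l = \<phi> x" by auto
    have "set l \<subseteq> {..<2^m}" using ents_bound[OF U, of "init blank (inp x)" b "K x"] w by (simp add: \<phi>_def init_def)
    moreover have "length l \<le> p" using ents_le_passes[OF b pinv_init[OF b, of blank "inp x"], where M=M and t="K x"] K[OF w(1)] w
      by (simp add: \<phi>_def)
    ultimately show "l \<in> ?L" by simp
  qed
  have det: "?g w1 = ?g w2" if "w1 \<in> I" "w2 \<in> I" "\<phi> w1 = \<phi> w2" for w1 w2
  proof -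
    have R: "Rel b (init blank (inp w1)) (init blank (inp w2))"
      using W that b unfolding Rel_def lefteq_def init_def by simp
    have "lefteq b ((step M ^^ K w1) (init blank (inp w1))) ((step M ^^ K w2) (init blank (inp w2)))"
      by (rule left_det[OF b R]) (use K[OF that(1)] K[OF that(2)] that(3) in \<open>auto simp: \<phi>_def\<close>)
    then show ?thesis using K[OF that(1)] K[OF that(2)] unfolding lefteq_def by simp
  qed
  define h where "h l = ?g (SOME x. x \<in> I \<and> \<phi> x = l)" for l
  have "?g ` I \<subseteq> h ` (\<phi> ` I)"
  proof
    fix y assume "y \<in> ?g ` I"
    then obtain x where w: "x \<in> I" "y = ?g x" by auto
    have "\<exists>w'. w' \<in> I \<and> \<phi> w' = \<phi> x" using w by blast
    then have "(SOME w'. w' \<in> I \<and> \<phi> w' = \<phi> x) \<in> I \<and> \<phi> (SOME w'. w' \<in> I \<and> \<phi> w' = \<phi> x) = \<phi> x"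
      by (rule someI_ex)
    then have "h (\<phi> x) = y" using det w unfolding h_def by metis
    then show "y \<in> h ` (\<phi> ` I)" using w by blast
  qed
  then have "card (?g ` I) \<le> card (h ` (\<phi> ` I))"
    by (rule card_mono[rotated]) (use finite_subset[OF phiL fin] in simp)
  also have "\<dots> \<le> card (\<phi> ` I)" by (rule card_image_le) (rule finite_subset[OF phiL fin])
  also have "\<dots> \<le> card ?L" by (rule card_mono[OF fin phiL])
  finally show ?thesis .
qed

lemma geom_bound: "1 \<le> m \<Longrightarrow> (\<Sum>i\<le>p. ((2::nat)^m)^i) \<le> 2^(m*p+1)"
proof (induction p)
  case 0 then show ?case by simp
next
  case (Suc p)
  have "(\<Sum>i\<le>Suc p. ((2::nat)^m)^i) = (\<Sum>i\<le>p. ((2::nat)^m)^i) + 2^(m * Suc p)"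
    by (simp add: power_mult[symmetric] power_add[symmetric])
  also have "\<dots> \<le> 2^(m*p+1) + 2^(m * Suc p)" using Suc by simp
  also have "2^(m*p+1) \<le> (2::nat)^(m * Suc p)" using Suc.prems by (intro power_increasing) auto
  finally have "(\<Sum>i\<le>Suc p. ((2::nat)^m)^i) \<le> 2^(m * Suc p) + 2^(m * Suc p)" by simp
  then show ?case by simp
qed

lemma lists_bound: "1 \<le> m \<Longrightarrow> card {l. set l \<subseteq> {..<(2::nat)^m} \<and> length l \<le> p} \<le> 2^(m*p+1)"
  using card_lists_length_le[of "{..<(2::nat)^m}" p] geom_bound[of m p] by simp


lemma rep1_less: "((replicate a (1::nat) @ [0]) < replicate j 1 @ [0]) \<longleftrightarrow> a < j"
proof (induction a arbitrary: j)
  case 0 then show ?case by (cases j) auto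
next
  case (Suc a) then show ?case by (cases j) auto
qed

lemma rep3_less: "a \<noteq> c \<Longrightarrow> ((replicate a (3::nat) @ 1 # u) < replicate c 3 @ 1 # v) \<longleftrightarrow> a < c"
proof (induction a arbitrary: c)
  case 0 then show ?case by (cases c) auto
next
  case (Suc a) then show ?case by (cases c) auto
qed

definition invT :: "nat \<Rightarrow> nat list \<Rightarrow> nat list" where
  "invT k E = E @ 2 # replicate k 1 @ [0]"

lemma invT_valid:
  assumes "set E \<subseteq> {2,3}"
  shows "valid_text {0,1,2,3} (invT k E)"
proof -
  have "\<forall>i < length (invT k E) - 1. 0 < invT k E ! i"
  proof (intro allI impI)
    fix i assume i: "i < length (invT k E) - 1"
    have eq: "invT k E = (E @ 2 # replicate k 1) @ [0]" by (simp add: invT_def)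
    have "i < length (E @ 2 # replicate k 1)" using i by (simp add: invT_def)
    then have "invT k E ! i = (E @ 2 # replicate k 1) ! i" unfolding eq by (rule nth_append_left)
    moreover have "(E @ 2 # replicate k 1) ! i \<in> set (E @ 2 # replicate k 1)"
      using \<open>i < length (E @ 2 # replicate k 1)\<close> by (rule nth_mem)
    ultimately show "0 < invT k E ! i" using assms by auto
  qed
  then show ?thesis using assms unfolding valid_text_def by (auto simp: invT_def)
qed

lemma invT_len: "length (invT k E) = length E + k + 2"
  by (simp add: invT_def)

lemma invT_drop_hi:
  assumes "length E = k - 1" "1 \<le> k" "k \<le> y" "y \<le> 2 * k"
  shows "drop y (invT k E) = replicate (2 * k - y) 1 @ [0]"
proof -
  have eq: "invT k E = (E @ [2]) @ (replicate k 1 @ [0])" by (simp add: invT_def)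
  have l: "length (E @ [2]) = k" using assms by simp
  have "drop y (invT k E) = drop (y - k) (replicate k 1 @ [0])"
    unfolding eq drop_append l using l assms(3) by simp
  also have "\<dots> = replicate (k - (y - k)) 1 @ [0]" using assms by simp
  also have "k - (y - k) = 2 * k - y" using assms by simp
  finally show ?thesis .
qed

lemma invT_drop_lo:
  assumes "length E = k - 1" "1 \<le> k" "y < k" "set E \<subseteq> {2,3}"
  shows "\<exists>x xs. drop y (invT k E) = x # xs \<and> 2 \<le> x"
proof (cases "y < length E")
  case True
  then have "drop y (invT k E) = E ! y # (drop (Suc y) E @ 2 # replicate k 1 @ [0])"
    by (simp add: invT_def Cons_nth_drop_Suc)
  moreover have "E ! y \<in> set E" using True by simp
  ultimately show ?thesis using assms by auto
next
  case False
  then have "y = length E" using assms by simp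
  then show ?thesis by (simp add: invT_def)
qed

lemma invT_sa:
  assumes E: "length E = k - 1" "1 \<le> k" "set E \<subseteq> {2,3}" and j: "j \<le> k"
  shows "sa (invT k E) ! j = 2 * k - j"
proof -
  let ?T = "invT k E"
  have n: "length ?T = 2 * k + 1" using E by (simp add: invT_len)
  have S: "{y. y < length ?T \<and> drop y ?T < drop (2 * k - j) ?T} = {2 * k - j + 1..2 * k}"
  proof (rule set_eqI)
    fix y
    have dx: "drop (2 * k - j) ?T = replicate j 1 @ [0]" using invT_drop_hi[OF E(1,2)] j by simp
    show "y \<in> {y. y < length ?T \<and> drop y ?T < drop (2 * k - j) ?T} \<longleftrightarrow> y \<in> {2 * k - j + 1..2 * k}"
    proof (cases "k \<le> y")
      case True
      show ?thesis
      proof (cases "y \<le> 2 * k")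
        case True2: True
        then show ?thesis using invT_drop_hi[OF E(1,2) True True2] dx rep1_less n j by auto
      next
        case False then show ?thesis using n by auto
      qed
    next
      case False
      then have "y < k" by simp
      then obtain x xs where xx: "drop y ?T = x # xs" "2 \<le> x" using invT_drop_lo[OF E(1,2) _ E(3)] by blast
      have "\<not> x # xs < replicate j 1 @ [0]" using xx(2) by (cases j) auto
      then show ?thesis using xx dx False j by auto
    qed
  qed
  have "card {y. y < length ?T \<and> drop y ?T < drop (2 * k - j) ?T} = j" using S j E by simp
  then show ?thesis using sa_nth[of "2 * k - j" ?T j] n by simp
qed

lemma invT_bwt_take:
  assumes E: "length E = k - 1" "1 \<le> k" "set E \<subseteq> {2,3}"
  shows "take (k + 1) (bwt (invT k E)) = replicate k 1 @ [2]"
proof (rule nth_equalityI)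
  let ?T = "invT k E"
  have n: "length ?T = 2 * k + 1" using E by (simp add: invT_len)
  show "length (take (k + 1) (bwt ?T)) = length (replicate k 1 @ [2::nat])" using n by (simp add: length_bwt)
  fix j assume "j < length (take (k + 1) (bwt ?T))"
  then have j: "j \<le> k" using n by (simp add: length_bwt)
  have "bwt ?T ! j = ?T ! (2 * k - j - 1)" using bwt_nth[of j ?T] invT_sa[OF E j] n j E by simp
  also have "\<dots> = (if j < k then 1 else 2)"
  proof (cases "j < k")
    case True
    have eq: "?T = (E @ [2]) @ (replicate k 1 @ [0])" by (simp add: invT_def)
    have l: "length (E @ [2]) = k" using E by simp
    have ix: "2 * k - j - 1 = length (E @ [2]) + (k - j - 1)" using l True by simp
    have "?T ! (2 * k - j - 1) = (replicate k 1 @ [0]) ! (k - j - 1)"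
      unfolding ix eq by (rule nth_append_length_plus)
    also have "\<dots> = 1" using True by (simp add: nth_append)
    finally show ?thesis using True by simp
  next
    case False
    then have "2 * k - j - 1 = length E" using j E by simp
    then show ?thesis using False by (simp add: invT_def nth_append)
  qed
  finally show "take (k + 1) (bwt ?T) ! j = (replicate k 1 @ [2]) ! j" using j n
    by (simp add: length_bwt nth_append)
qed

lemma invT_take: "length E = k - 1 \<Longrightarrow> 1 \<le> k \<Longrightarrow> take (k + 1) (invT k E) = E @ [2, 1]"
  by (simp add: invT_def)


definition fwdT :: "nat \<Rightarrow> nat list \<Rightarrow> nat list" where
  "fwdT k E = replicate k 3 @ 1 # E @ [0]"

lemma fwdT_len: "length (fwdT k E) = length E + k + 2"
  by (simp add: fwdT_def)

lemma fwdT_valid: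
  assumes "set E \<subseteq> {1,2}"
  shows "valid_text {0,1,2,3} (fwdT k E)"
proof -
  have "\<forall>i < length (fwdT k E) - 1. 0 < fwdT k E ! i"
  proof (intro allI impI)
    fix i assume i: "i < length (fwdT k E) - 1"
    have eq: "fwdT k E = (replicate k 3 @ 1 # E) @ [0]" by (simp add: fwdT_def)
    have il: "i < length (replicate k 3 @ 1 # E)" using i by (simp add: fwdT_def)
    then have "fwdT k E ! i = (replicate k 3 @ 1 # E) ! i" unfolding eq by (rule nth_append_left)
    moreover have "(replicate k 3 @ 1 # E) ! i \<in> set (replicate k 3 @ 1 # E)"
      using il by (rule nth_mem)
    ultimately show "0 < fwdT k E ! i" using assms by auto
  qed
  then show ?thesis using assms unfolding valid_text_def by (auto simp: fwdT_def)
qed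

lemma fwdT_drop_lo:
  assumes "y \<le> k"
  shows "drop y (fwdT k E) = replicate (k - y) 3 @ 1 # E @ [0]"
  using assms by (simp add: fwdT_def)

lemma fwdT_drop_hi:
  assumes "length E = k - 1" "k < y" "y < 2 * k + 1" "set E \<subseteq> {1,2}"
  shows "\<exists>x xs. drop y (fwdT k E) = x # xs \<and> x < 3"
proof -
  have eq: "fwdT k E = (replicate k 3 @ [1]) @ (E @ [0])" by (simp add: fwdT_def)
  have l: "length (replicate k 3 @ [1::nat]) = k + 1" by simp
  have yl: "y - (k + 1) < length (E @ [0])" using assms by simp
  have "drop y (fwdT k E) = drop (y - (k + 1)) (E @ [0])"
    unfolding eq drop_append l using assms(2) by simp
  also have "\<dots> = (E @ [0]) ! (y - (k + 1)) # drop (Suc (y - (k + 1))) (E @ [0])"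
    by (rule Cons_nth_drop_Suc[OF yl, symmetric])
  finally have "drop y (fwdT k E) = (E @ [0]) ! (y - (k + 1)) # drop (Suc (y - (k + 1))) (E @ [0])" .
  moreover have "(E @ [0]) ! (y - (k + 1)) \<in> set (E @ [0])" using yl by (rule nth_mem)
  ultimately show ?thesis using assms(4) by auto
qed

lemma fwdT_sa:
  assumes E: "length E = k - 1" "1 \<le> k" "set E \<subseteq> {1,2}" and t: "t < k"
  shows "sa (fwdT k E) ! (k + 1 + t) = k - 1 - t"
proof -
  let ?T = "fwdT k E"
  have n: "length ?T = 2 * k + 1" using E by (simp add: fwdT_len)
  have dx: "drop (k - 1 - t) ?T = replicate (Suc t) 3 @ 1 # E @ [0]"
    using fwdT_drop_lo[of "k - 1 - t" k E] t by (simp add: Suc_diff_Suc)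
  have S: "{y. y < length ?T \<and> drop y ?T < drop (k - 1 - t) ?T} = {k - t..2 * k}"
  proof (rule set_eqI)
    fix y
    show "y \<in> {y. y < length ?T \<and> drop y ?T < drop (k - 1 - t) ?T} \<longleftrightarrow> y \<in> {k - t..2 * k}"
    proof (cases "y \<le> k")
      case True
      have dy: "drop y ?T = replicate (k - y) 3 @ 1 # E @ [0]" by (rule fwdT_drop_lo[OF True])
      show ?thesis
      proof (cases "k - y = Suc t")
        case True2: True
        then have "\<not> drop y ?T < drop (k - 1 - t) ?T" using dy dx by simp
        moreover have "y \<notin> {k - t..2 * k}" using True2 True by auto
        ultimately show ?thesis by simp
      next
        case False
        have "drop y ?T < drop (k - 1 - t) ?T \<longleftrightarrow> k - y < Suc t" using dy dx rep3_less[OF False] by simp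
        then show ?thesis using True n t by auto
      qed
    next
      case False
      show ?thesis
      proof (cases "y < 2 * k + 1")
        case True
        obtain x xs where xx: "drop y ?T = x # xs" "x < 3" using fwdT_drop_hi[OF E(1) _ True E(3)] False by force
        have "drop y ?T < drop (k - 1 - t) ?T" using xx dx by simp
        then show ?thesis using True False n by auto
      next
        case False2: False then show ?thesis using n by auto
      qed
    qed
  qed
  have "card {y. y < length ?T \<and> drop y ?T < drop (k - 1 - t) ?T} = k + 1 + t" using S t by simp
  then show ?thesis using sa_nth[of "k - 1 - t" ?T "k + 1 + t"] n t by simp
qed

lemma fwdT_bwt_drop:
  assumes E: "length E = k - 1" "1 \<le> k" "set E \<subseteq> {1,2}"
  shows "drop (k + 1) (bwt (fwdT k E)) = replicate (k - 1) 3 @ [0]"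
proof (rule nth_equalityI)
  let ?T = "fwdT k E"
  have n: "length ?T = 2 * k + 1" using E by (simp add: fwdT_len)
  show "length (drop (k + 1) (bwt ?T)) = length (replicate (k - 1) 3 @ [0::nat])" using n E by (simp add: length_bwt)
  fix t assume "t < length (drop (k + 1) (bwt ?T))"
  then have t: "t < k" using n by (simp add: length_bwt)
  have "drop (k + 1) (bwt ?T) ! t = bwt ?T ! (k + 1 + t)" using n t by (simp add: length_bwt)
  also have "\<dots> = (if k - 1 - t = 0 then last ?T else ?T ! (k - 1 - t - 1))"
    using bwt_nth[of "k + 1 + t" ?T] fwdT_sa[OF E t] n t by simp
  also have "\<dots> = (if t < k - 1 then 3 else 0)"
  proof (cases "t < k - 1")
    case True
    then have "?T ! (k - 1 - t - 1) = 3" by (simp add: fwdT_def nth_append)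
    moreover have "k - 1 - t \<noteq> 0" using True by simp
    ultimately show ?thesis using True by simp
  next
    case False
    then show ?thesis by (simp add: fwdT_def)
  qed
  finally show "drop (k + 1) (bwt ?T) ! t = (replicate (k - 1) 3 @ [0]) ! t" using t E
    by (simp add: nth_append)
qed

lemma fwdT_take: "take (k + 1) (fwdT k E) = replicate k 3 @ [1]"
  by (simp add: fwdT_def)


lemma take_as_map: "n \<le> length xs \<Longrightarrow> map (disk_of blank xs) [0..<n] = take n xs"
  by (rule nth_equalityI) (auto simp: disk_of_def)

lemma m0_identity:
  assumes U: "uses_memory M 0" and C: "computes M blank p w out"
  shows "disk_of blank w = disk_of blank out"
proof -
  obtain k where f: "final M (st ((step M ^^ k) (init blank w)))"
    and t: "tape ((step M ^^ k) (init blank w)) = disk_of blank out"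
    using C unfolding computes_def Let_def by blast
  have "st ((step M ^^ k) (init blank w)) < 2^0" by (rule st_bound[OF U]) (simp add: init_def)
  then have "final M (st ((step M ^^ 0) (init blank w)))" using f by (simp add: init_def)
  then have "(step M ^^ (0 + k)) (init blank w) = (step M ^^ 0) (init blank w)" by (rule final_stays)
  then show ?thesis using t by (simp add: init_def)
qed

lemma card_Es: "card {E. set E \<subseteq> A \<and> length E = n} = card A ^ n" if "finite A"
  using card_lists_length_eq[OF that] by simp

lemma fwd_bound:
  assumes U: "uses_memory M m" and k: "2 \<le> k"
    and C: "\<forall>T. valid_text {0,1,2,3} T \<and> length T = 2 * k + 1 \<longrightarrow> computes M blank p T (bwt T)"
  shows "1 \<le> m \<and> k \<le> m * p + 2"
proof -
  let ?Es = "{E. set E \<subseteq> {1::nat,2} \<and> length E = k - 1}"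
  have famC: "\<forall>E\<in>?Es. computes M blank p (fwdT k E) (bwt (fwdT k E))"
  proof
    fix E assume "E \<in> ?Es"
    then show "computes M blank p (fwdT k E) (bwt (fwdT k E))"
      using C fwdT_valid[of E k] fwdT_len[of k E] k by auto
  qed
  have E1: "\<And>E. E \<in> ?Es \<Longrightarrow> length E = k - 1 \<and> 1 \<le> k \<and> set E \<subseteq> {1,2}" using k by auto
  have m: "1 \<le> m"
  proof (rule ccontr)
    assume "\<not> 1 \<le> m" then have m0: "m = 0" by simp
    let ?E = "replicate (k - 1) (1::nat)"
    have Ein: "?E \<in> ?Es" by auto
    then have "disk_of blank (fwdT k ?E) = disk_of blank (bwt (fwdT k ?E))"
      using m0_identity[of M blank p] U m0 famC by auto
    then have "disk_of blank (fwdT k ?E) (k + 1) = disk_of blank (bwt (fwdT k ?E)) (k + 1)" by simp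
    moreover have len: "length (fwdT k ?E) = 2 * k + 1" using k by (simp add: fwdT_len)
    moreover have "fwdT k ?E ! (k + 1) = 1" using k by (simp add: fwdT_def nth_append)
    moreover have "bwt (fwdT k ?E) ! (k + 1) = 3"
    proof -
      have "drop (k + 1) (bwt (fwdT k ?E)) ! 0 = 3" using fwdT_bwt_drop[of ?E k] k by (simp add: nth_append)
      then show ?thesis using len by (simp add: length_bwt)
    qed
    ultimately show False using k by (simp add: disk_of_def length_bwt invT_def fwdT_def)
  qed
  have dd: "\<forall>E\<in>?Es. \<forall>i<k+1. disk_of blank (fwdT k E) i = (replicate k 3 @ [1]) ! i"
  proof (intro ballI allI impI)
    fix E i assume E: "E \<in> ?Es" and i: "i < k + 1"
    have "disk_of blank (fwdT k E) i = fwdT k E ! i" using i E k by (simp add: disk_of_def fwdT_len)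
    also have "\<dots> = take (k + 1) (fwdT k E) ! i" using i by simp
    also have "\<dots> = (replicate k 3 @ [1]) ! i" by (simp only: fwdT_take)
    finally show "disk_of blank (fwdT k E) i = (replicate k 3 @ [1]) ! i" .
  qed
  have cnt: "card ((\<lambda>E. map (disk_of blank (bwt (fwdT k E))) [0..<k+1]) ` ?Es) \<le> card {l. set l \<subseteq> {..<(2::nat)^m} \<and> length l \<le> p}"
    by (rule counting[OF _ U dd famC]) simp
  have img: "(\<lambda>E. map (disk_of blank (bwt (fwdT k E))) [0..<k+1]) ` ?Es = (\<lambda>E. take (k+1) (bwt (fwdT k E))) ` ?Es"
    by (rule image_cong[OF refl], rule take_as_map) (auto simp: length_bwt fwdT_len)
  have inj: "inj_on (\<lambda>E. take (k+1) (bwt (fwdT k E))) ?Es"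
  proof (rule inj_onI)
    fix E1 E2 assume e1: "E1 \<in> ?Es" and e2: "E2 \<in> ?Es" and eq: "take (k+1) (bwt (fwdT k E1)) = take (k+1) (bwt (fwdT k E2))"
    have "drop (k+1) (bwt (fwdT k E1)) = drop (k+1) (bwt (fwdT k E2))"
      using fwdT_bwt_drop[of E1 k] fwdT_bwt_drop[of E2 k] E1[OF e1] E1[OF e2] by simp
    then have "bwt (fwdT k E1) = bwt (fwdT k E2)" using eq by (metis append_take_drop_id)
    then have "fwdT k E1 = fwdT k E2" using bwt_inj fwdT_valid E1[OF e1] E1[OF e2] by metis
    then show "E1 = E2" by (simp add: fwdT_def)
  qed
  have "card ?Es = 2 ^ (k - 1)" using card_Es[of "{1::nat,2}" "k - 1"] by (simp add: numeral_2_eq_2)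
  then have "2 ^ (k - 1) \<le> card {l. set l \<subseteq> {..<(2::nat)^m} \<and> length l \<le> p}"
    using cnt img card_image[OF inj] by simp
  also have "\<dots> \<le> 2 ^ (m * p + 1)" by (rule lists_bound[OF m])
  finally have X: "(2::nat) ^ (k - 1) \<le> 2 ^ (m * p + 1)" .
  have "k - 1 \<le> m * p + 1" by (rule power_le_imp_le_exp[OF _ X]) simp
  then show ?thesis using m by simp
qed

lemma inv_bound:
  assumes U: "uses_memory M m" and k: "2 \<le> k"
    and C: "\<forall>T. valid_text {0,1,2,3} T \<and> length T = 2 * k + 1 \<longrightarrow> computes M blank p (bwt T) T"
  shows "1 \<le> m \<and> k \<le> m * p + 2"
proof -
  let ?Es = "{E. set E \<subseteq> {2::nat,3} \<and> length E = k - 1}"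
  have famC: "\<forall>E\<in>?Es. computes M blank p (bwt (invT k E)) (invT k E)"
  proof
    fix E assume "E \<in> ?Es"
    then show "computes M blank p (bwt (invT k E)) (invT k E)"
      using C invT_valid[of E k] invT_len[of k E] k by auto
  qed
  have E1: "\<And>E. E \<in> ?Es \<Longrightarrow> length E = k - 1 \<and> 1 \<le> k \<and> set E \<subseteq> {2,3}" using k by auto
  have m: "1 \<le> m"
  proof (rule ccontr)
    assume "\<not> 1 \<le> m" then have m0: "m = 0" by simp
    let ?E = "replicate (k - 1) (2::nat)"
    have Ein: "?E \<in> ?Es" by auto
    then have "disk_of blank (bwt (invT k ?E)) = disk_of blank (invT k ?E)"
      using m0_identity[of M blank p] U m0 famC by auto
    then have "disk_of blank (bwt (invT k ?E)) 0 = disk_of blank (invT k ?E) 0" by simp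
    moreover have len: "length (invT k ?E) = 2 * k + 1" using k by (simp add: invT_len)
    moreover have "invT k ?E ! 0 = 2" using k by (cases k) (simp_all add: invT_def nth_append)
    moreover have "bwt (invT k ?E) ! 0 = 1"
    proof -
      have "take (k + 1) (bwt (invT k ?E)) ! 0 = 1" using invT_bwt_take[of ?E k] k by (simp add: nth_append)
      then show ?thesis by simp
    qed
    ultimately show False using k by (simp add: disk_of_def length_bwt invT_def fwdT_def)
  qed
  have dd: "\<forall>E\<in>?Es. \<forall>i<k+1. disk_of blank (bwt (invT k E)) i = (replicate k 1 @ [2]) ! i"
  proof (intro ballI allI impI)
    fix E i assume E: "E \<in> ?Es" and i: "i < k + 1"
    have "disk_of blank (bwt (invT k E)) i = bwt (invT k E) ! i" using i E1[OF E] by (simp add: disk_of_def invT_len length_bwt)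
    also have "\<dots> = take (k + 1) (bwt (invT k E)) ! i" using i by simp
    also have "\<dots> = (replicate k 1 @ [2]) ! i" using invT_bwt_take[of E k] E1[OF E] by simp
    finally show "disk_of blank (bwt (invT k E)) i = (replicate k 1 @ [2]) ! i" .
  qed
  have cnt: "card ((\<lambda>E. map (disk_of blank (invT k E)) [0..<k+1]) ` ?Es) \<le> card {l. set l \<subseteq> {..<(2::nat)^m} \<and> length l \<le> p}"
    by (rule counting[OF _ U dd famC]) simp
  have img: "(\<lambda>E. map (disk_of blank (invT k E)) [0..<k+1]) ` ?Es = (\<lambda>E. take (k+1) (invT k E)) ` ?Es"
    by (rule image_cong[OF refl], rule take_as_map) (auto simp: invT_len)
  have inj: "inj_on (\<lambda>E. take (k+1) (invT k E)) ?Es"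
  proof (rule inj_onI)
    fix E1 E2 assume e1: "E1 \<in> ?Es" and e2: "E2 \<in> ?Es" and eq: "take (k+1) (invT k E1) = take (k+1) (invT k E2)"
    then show "E1 = E2" using invT_take[of E1 k] invT_take[of E2 k] E1[OF e1] E1[OF e2] by simp
  qed
  have "card ?Es = 2 ^ (k - 1)" using card_Es[of "{2::nat,3}" "k - 1"] by (simp add: numeral_2_eq_2)
  then have "2 ^ (k - 1) \<le> card {l. set l \<subseteq> {..<(2::nat)^m} \<and> length l \<le> p}"
    using cnt img card_image[OF inj] by simp
  also have "\<dots> \<le> 2 ^ (m * p + 1)" by (rule lists_bound[OF m])
  finally have X: "(2::nat) ^ (k - 1) \<le> 2 ^ (m * p + 1)" .
  have "k - 1 \<le> m * p + 1" by (rule power_le_imp_le_exp[OF _ X]) simp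
  then show ?thesis using m by simp
qed

theorem theorem7:
  shows "\<exists>\<Sigma> :: nat set. finite \<Sigma> \<and>
    (\<forall>(blank :: nat) (M :: nat \<Rightarrow> machine) (m :: nat \<Rightarrow> nat) (p :: nat \<Rightarrow> nat).
       blank \<notin> \<Sigma> \<and> (\<forall>n. uses_memory (M n) (m n)) \<and>
       (\<lambda>n. real (m n * p n)) \<in> o(\<lambda>n. real n) \<longrightarrow>
         infinite {n. \<exists>T. valid_text \<Sigma> T \<and> length T = n \<and>
                           \<not> computes (M n) blank (p n) T (bwt T)} \<and>
         infinite {n. \<exists>T. valid_text \<Sigma> T \<and> length T = n \<and>
                           \<not> computes (M n) blank (p n) (bwt T) T})"
proof (rule exI[of _ "{0,1,2,3}"], intro conjI allI impI)
  show "finite {0::nat,1,2,3}" by simp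
  fix blank :: nat and M :: "nat \<Rightarrow> machine" and m p :: "nat \<Rightarrow> nat"
  assume H: "blank \<notin> {0,1,2,3} \<and> (\<forall>n. uses_memory (M n) (m n)) \<and>
       (\<lambda>n. real (m n * p n)) \<in> o(\<lambda>n. real n)"
  have U: "\<And>n. uses_memory (M n) (m n)" using H by blast
  have "eventually (\<lambda>n. norm (real (m n * p n)) \<le> (1/8) * norm (real n)) at_top"
    using landau_o.smallD[of "\<lambda>n. real (m n * p n)" at_top "\<lambda>n. real n" "1/8"] H by simp
  then obtain N where N: "\<And>n. n \<ge> N \<Longrightarrow> real (m n * p n) \<le> (1/8) * real n"
    unfolding eventually_at_top_linorder by auto
  have small: "m (2*k+1) * p (2*k+1) + 2 < k" if "k \<ge> max 3 N" for k
  proof -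
    have "N \<le> 2*k+1" using that by simp
    from N[OF this] have "real (m (2*k+1) * p (2*k+1)) \<le> (1/8) * real (2*k+1)" .
    then have "8 * real (m (2*k+1) * p (2*k+1)) \<le> 8 * (1/8 * real (2*k+1))" by (rule mult_left_mono) simp
    then have "8 * real (m (2*k+1) * p (2*k+1)) \<le> real (2 * k + 1)" by simp
    then have "real (8 * (m (2*k+1) * p (2*k+1))) \<le> real (2 * k + 1)" by simp
    then have "8 * (m (2*k+1) * p (2*k+1)) \<le> 2 * k + 1" by (simp only: of_nat_le_iff)
    then show ?thesis using that by linarith
  qed
  let ?S1 = "{n. \<exists>T. valid_text {0,1,2,3} T \<and> length T = n \<and> \<not> computes (M n) blank (p n) T (bwt T)}"
  let ?S2 = "{n. \<exists>T. valid_text {0,1,2,3} T \<and> length T = n \<and> \<not> computes (M n) blank (p n) (bwt T) T}"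
  have in1: "2*k+1 \<in> ?S1" if "k \<ge> max 3 N" for k
  proof (rule ccontr)
    assume "2*k+1 \<notin> ?S1"
    then have "\<forall>T. valid_text {0,1,2,3} T \<and> length T = 2 * k + 1 \<longrightarrow> computes (M (2*k+1)) blank (p (2*k+1)) T (bwt T)"
      by auto
    moreover have k2: "2 \<le> k" using that by simp
    ultimately have "1 \<le> m (2*k+1) \<and> k \<le> m (2*k+1) * p (2*k+1) + 2" using fwd_bound[OF U] by blast
    then show False using small[OF that] by simp
  qed
  have in2: "2*k+1 \<in> ?S2" if "k \<ge> max 3 N" for k
  proof (rule ccontr)
    assume "2*k+1 \<notin> ?S2"
    then have "\<forall>T. valid_text {0,1,2,3} T \<and> length T = 2 * k + 1 \<longrightarrow> computes (M (2*k+1)) blank (p (2*k+1)) (bwt T) T"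
      by auto
    moreover have k2: "2 \<le> k" using that by simp
    ultimately have "1 \<le> m (2*k+1) \<and> k \<le> m (2*k+1) * p (2*k+1) + 2" using inv_bound[OF U] by blast
    then show False using small[OF that] by simp
  qed
  show "infinite ?S1"
    unfolding infinite_nat_iff_unbounded_le
  proof
    fix a show "\<exists>n\<ge>a. n \<in> ?S1" using in1[of "max (max 3 N) a"] by (intro exI[of _ "2 * max (max 3 N) a + 1"]) auto
  qed
  show "infinite ?S2"
    unfolding infinite_nat_iff_unbounded_le
  proof
    fix a show "\<exists>n\<ge>a. n \<in> ?S2" using in2[of "max (max 3 N) a"] by (intro exI[of _ "2 * max (max 3 N) a + 1"]) auto
  qed
qed


end
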